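(* Let $G$ be a graph and $x$ an arbitrary vertex of $G$. Then there exists a Grundy dominating sequence of $G$ that contains $x$.
   Context: For a graph $G$, $N[v]$ denotes the closed neighborhood of $v$. A sequence $(v_1,\ldots,v_k)$ of distinct vertices is a closed neighborhood sequence if $N[v_i]\setminus\bigcup_{j=1}^{i-1}N[v_j]\neq\emptyset$ for each $i\in[k]$. A Grundy dominating sequence is a closed neighborhood sequence of maximum possible length in $G$. *)

theory Defs
  imports Main
begin

definition graph :: "'a set \<Rightarrow> ('a \<Rightarrow> 'a \<Rightarrow> bool) \<Rightarrow> bool" where
  "graph V E \<longleftrightarrow> finite V \<and> (\<forall>u v. E u v \<longrightarrow> E v u) \<and> (\<forall>v. \<not> E v v)
     \<and> (\<forall>u v. E u v \<longrightarrow> u \<in> V \<and> v \<in> V)"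

definition closed_nbhd :: "'a set \<Rightarrow> ('a \<Rightarrow> 'a \<Rightarrow> bool) \<Rightarrow> 'a \<Rightarrow> 'a set" where
  "closed_nbhd V E v = {u \<in> V. u = v \<or> E v u}"

definition closed_nbhd_seq :: "'a set \<Rightarrow> ('a \<Rightarrow> 'a \<Rightarrow> bool) \<Rightarrow> 'a list \<Rightarrow> bool" where
  "closed_nbhd_seq V E vs \<longleftrightarrow> distinct vs \<and> set vs \<subseteq> V \<and>
     (\<forall>i < length vs. closed_nbhd V E (vs ! i) - (\<Union>j<i. closed_nbhd V E (vs ! j)) \<noteq> {})"

definition grundy_dominating_seq :: "'a set \<Rightarrow> ('a \<Rightarrow> 'a \<Rightarrow> bool) \<Rightarrow> 'a list \<Rightarrow> bool" where
  "grundy_dominating_seq V E vs \<longleftrightarrow> closed_nbhd_seq V E vs \<and>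
     (\<forall>ws. closed_nbhd_seq V E ws \<longrightarrow> length ws \<le> length vs)"

end

theory Submission
  imports Defs
begin

lemma grundy_exists:
  assumes "graph V E"
  shows "\<exists>vs. grundy_dominating_seq V E vs"
proof -
  have fin: "finite V" using assms by (simp add: graph_def)
  have "closed_nbhd_seq V E []" by (simp add: closed_nbhd_seq_def)
  moreover have "\<forall>ws. closed_nbhd_seq V E ws \<longrightarrow> length ws < card V + 1"
  proof (intro allI impI)
    fix ws assume "closed_nbhd_seq V E ws"
    then have "distinct ws" "set ws \<subseteq> V" by (auto simp: closed_nbhd_seq_def)
    then have "length ws \<le> card V" using fin
      by (metis card_mono distinct_card)
    then show "length ws < card V + 1" by simp
  qed
  ultimately show ?thesis
    using ex_has_greatest_nat[of "closed_nbhd_seq V E" "[]" length "card V + 1"]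
    by (auto simp: grundy_dominating_seq_def)
qed

theorem proposition4p1:
  fixes V :: "'a set" and E :: "'a \<Rightarrow> 'a \<Rightarrow> bool" and x :: 'a
  assumes "graph V E" and "x \<in> V"
  shows "\<exists>vs. grundy_dominating_seq V E vs \<and> x \<in> set vs"
proof -
  obtain vs where g: "grundy_dominating_seq V E vs" using grundy_exists[OF assms(1)] by blast
  show ?thesis
  proof (cases "x \<in> set vs")
    case True then show ?thesis using g by blast
  next
    case xn: False
    define N where "N = closed_nbhd V E"
    define U where "U = (\<lambda>i. \<Union>j<i. N (vs ! j))"
    have cs: "closed_nbhd_seq V E vs" and mx: "\<And>ws. closed_nbhd_seq V E ws \<Longrightarrow> length ws \<le> length vs"
      using g by (auto simp: grundy_dominating_seq_def)
    have dv: "distinct vs" "set vs \<subseteq> V" and fp: "\<And>i. i < length vs \<Longrightarrow> N (vs ! i) - U i \<noteq> {}"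
      using cs by (auto simp: closed_nbhd_seq_def N_def U_def)
    have xN: "x \<in> N x" using assms(2) by (simp add: N_def closed_nbhd_def)
    have cover: "N x \<subseteq> U (length vs)"
    proof (rule ccontr)
      assume nc: "\<not> N x \<subseteq> U (length vs)"
      have "closed_nbhd_seq V E (vs @ [x])"
        unfolding closed_nbhd_seq_def
      proof (intro conjI allI impI)
        show "distinct (vs @ [x])" using dv xn by simp
        show "set (vs @ [x]) \<subseteq> V" using dv assms(2) by simp
        fix i assume i: "i < length (vs @ [x])"
        show "closed_nbhd V E ((vs @ [x]) ! i) - (\<Union>j<i. closed_nbhd V E ((vs @ [x]) ! j)) \<noteq> {}"
        proof (cases "i < length vs")
          case True
          have "(\<Union>j<i. closed_nbhd V E ((vs @ [x]) ! j)) = U i"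
            using True by (auto simp: U_def N_def nth_append)
          then show ?thesis using fp[OF True] True by (simp add: nth_append N_def)
        next
          case False
          then have ii: "i = length vs" using i by simp
          have "(\<Union>j<i. closed_nbhd V E ((vs @ [x]) ! j)) = U i"
            using ii by (auto simp: U_def N_def nth_append)
          then show ?thesis using nc ii by (auto simp: nth_append N_def)
        qed
      qed
      from mx[OF this] show False by simp
    qed
    then have "length vs \<noteq> 0" using xN by (auto simp: U_def)
    then obtain m where m: "length vs = Suc m" by (cases "length vs") auto
    define i where "i = (LEAST i. N x \<subseteq> U (Suc i))"
    have i1: "N x \<subseteq> U (Suc i)" unfolding i_def using cover m by (metis LeastI)
    have im: "i \<le> m" unfolding i_def using cover m by (metis Least_le)
    have i2: "\<not> N x \<subseteq> U i"
    proof (cases i)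
      case 0 then show ?thesis using xN by (auto simp: U_def)
    next
      case (Suc i') then show ?thesis using not_less_Least[of i' "\<lambda>i. N x \<subseteq> U (Suc i)"]
        unfolding i_def by auto
    qed
    define ws where "ws = vs[i := x]"
    have len: "length ws = length vs" by (simp add: ws_def)
    have ilt: "i < length vs" using im m by simp
    have wsn: "\<And>j. j < length vs \<Longrightarrow> ws ! j = (if j = i then x else vs ! j)"
      by (simp add: ws_def)
    have Umono: "\<And>a b. a \<le> b \<Longrightarrow> U a \<subseteq> U b" unfolding U_def by (meson UN_mono lessThan_subset_iff order_refl)
    have cw: "closed_nbhd_seq V E ws"
      unfolding closed_nbhd_seq_def
    proof (intro conjI allI impI)
      show "distinct ws" unfolding ws_def using dv xn
        by (intro distinct_list_update) auto
      show "set ws \<subseteq> V" unfolding ws_def using dv assms(2)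
        by (meson insert_subset order_trans set_update_subset_insert)
      fix j assume j: "j < length ws"
      define U' where "U' = (\<Union>l<j. N (ws ! l))"
      have "N (ws ! j) - U' \<noteq> {}"
      proof (cases "j \<le> i")
        case True
        have "U' = U j" using True j len wsn by (auto simp: U'_def U_def)
        then show ?thesis
        proof (cases "j = i")
          case True then show ?thesis using \<open>U' = U j\<close> i2 wsn ilt by auto
        next
          case False then show ?thesis using \<open>U' = U j\<close> fp j len wsn by auto
        qed
      next
        case False
        have "U' \<subseteq> U j \<union> N x"
        proof
          fix y assume "y \<in> U'"
          then obtain l where l: "l < j" "y \<in> N (ws ! l)" by (auto simp: U'_def)
          then show "y \<in> U j \<union> N x" using j len wsn[of l]
            by (cases "l = i") (auto simp: U_def)
        qed
        moreover have "N x \<subseteq> U j" using i1 Umono[of "Suc i" j] False by auto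
        ultimately have "U' \<subseteq> U j" by blast
        then show ?thesis using fp[of j] j len wsn[of j] False by auto
      qed
      then show "closed_nbhd V E (ws ! j) - (\<Union>l<j. closed_nbhd V E (ws ! l)) \<noteq> {}"
        by (simp add: U'_def N_def)
    qed
    have "grundy_dominating_seq V E ws" using cw mx len by (simp add: grundy_dominating_seq_def)
    moreover have "x \<in> set ws" using ilt by (simp add: ws_def set_update_memI)
    ultimately show ?thesis by blast
  qed
qed

end
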